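(* Let $S\subset[m]$ with $\Lambda_S\neq\emptyset$. Then for every $v\in\Lambda_S$, $$\Lambda_S=\Delta_S\cap(v+K)=\{v+w\in\Delta_S: w\in K\}.$$ Consequently $\Lambda$ is contained in a finite union of translates of $K$.
   Context: $H=(V,E)$ is a finite hypergraph with $V=[m]$, $|E|=N\ge1$, hyperedges nonempty subsets of $[m]$, each vertex in at least one hyperedge. For $v\in\mathbb R^m$ and $I\in E$, $v_I=\sum_{i\in I}v_i$. $\Gamma=\{x\in\mathbb R^m:\sum_ix_i=0\}$; $I(H)$ is the $N\times m$ incidence matrix with entry $(I,i)$ equal to $1$ if $i\in I$, else $0$; $K=\ker(I(H)|_\Gamma)=\{w\in\Gamma: w_I=0\ \forall I\in E\}$. Fix $0<c<1/N$ and let $\Delta=\{x\in\mathbb R^m: x_i\ge0,\ \sum_i x_i=1,\ x_I\ge c\ \forall I\in E\}$. $L:\Delta\to\mathbb R$, $L(v)=-\sum_i v_i+\frac1N\sum_{I\in E}\log v_I$; $F_i(v)=v_i\frac{\partial L}{\partial v_i}(v)$ and $\Lambda=\{v\in\Delta:F(v)=0\}$. For $S\subset[m]$, the face $\Delta_S=\{v\in\Delta: v_i=0\iff i\notin S\}$, and $\Lambda_S=\{v\in\Delta_S:\frac{\partial L}{\partial v_i}(v)=0\ \forall i\in S\}$ (the $S$-singularities); $\Lambda=\bigcup_{S}\Lambda_S$. *)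

theory Defs
  imports "HOL-Analysis.Analysis" "HOL-Library.Function_Algebras"
begin

text \<open>Vertex set [m] is modelled by a finite type 'n (V = UNIV, m = CARD('n));
  vectors in R^m are functions 'n \<Rightarrow> real; the hypergraph is its edge set E.\<close>

definition hypergraph :: "'n::finite set set \<Rightarrow> bool" where
  "hypergraph E \<longleftrightarrow> E \<noteq> {} \<and> (\<forall>I\<in>E. I \<noteq> {}) \<and> (\<Union>E = UNIV)"

definition simplexDelta :: "'n::finite set set \<Rightarrow> real \<Rightarrow> ('n \<Rightarrow> real) set" where
  "simplexDelta E c = {x. (\<forall>i. x i \<ge> 0) \<and> (\<Sum>i\<in>UNIV. x i) = 1 \<and> (\<forall>I\<in>E. (\<Sum>i\<in>I. x i) \<ge> c)}"

definition Lfun :: "'n::finite set set \<Rightarrow> ('n \<Rightarrow> real) \<Rightarrow> real" where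
  "Lfun E v = - (\<Sum>i\<in>UNIV. v i) + (1 / real (card E)) * (\<Sum>I\<in>E. ln (\<Sum>i\<in>I. v i))"

definition partialD :: "(('n \<Rightarrow> real) \<Rightarrow> real) \<Rightarrow> ('n \<Rightarrow> real) \<Rightarrow> 'n \<Rightarrow> real" where
  "partialD f v i = deriv (\<lambda>t. f (\<lambda>j. v j + (if j = i then t else 0))) 0"

definition Ffield :: "'n::finite set set \<Rightarrow> ('n \<Rightarrow> real) \<Rightarrow> 'n \<Rightarrow> real" where
  "Ffield E v i = v i * partialD (Lfun E) v i"

definition LambdaSet :: "'n::finite set set \<Rightarrow> real \<Rightarrow> ('n \<Rightarrow> real) set" where
  "LambdaSet E c = {v \<in> simplexDelta E c. \<forall>i. Ffield E v i = 0}"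

definition face :: "'n::finite set set \<Rightarrow> real \<Rightarrow> 'n set \<Rightarrow> ('n \<Rightarrow> real) set" where
  "face E c S = {v \<in> simplexDelta E c. \<forall>i. v i = 0 \<longleftrightarrow> i \<notin> S}"

definition LambdaS :: "'n::finite set set \<Rightarrow> real \<Rightarrow> 'n set \<Rightarrow> ('n \<Rightarrow> real) set" where
  "LambdaS E c S = {v \<in> face E c S. \<forall>i\<in>S. partialD (Lfun E) v i = 0}"

definition kerK :: "'n::finite set set \<Rightarrow> ('n \<Rightarrow> real) set" where
  "kerK E = {w. (\<Sum>i\<in>UNIV. w i) = 0 \<and> (\<forall>I\<in>E. (\<Sum>i\<in>I. w i) = 0)}"

end

theory Submission
  imports Defs
begin

definition gsum :: "'n::finite set set \<Rightarrow> ('n \<Rightarrow> real) \<Rightarrow> 'n \<Rightarrow> real" where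
  "gsum E x i = (\<Sum>I\<in>E. if i \<in> I then 1 / (\<Sum>j\<in>I. x j) else 0)"

lemma sum_shift:
  fixes v :: "'n::finite \<Rightarrow> real"
  shows "(\<Sum>j\<in>I. v j + (if j = i then t else 0)) = (\<Sum>j\<in>I. v j) + (if i \<in> I then t else 0)"
  by (simp add: sum.distrib)

lemma partialD_eq:
  fixes E :: "'n::finite set set" and v :: "'n \<Rightarrow> real"
  assumes pos: "\<forall>I\<in>E. (\<Sum>j\<in>I. v j) > 0"
  shows "partialD (Lfun E) v i = -1 + (1 / real (card E)) * gsum E v i"
proof -
  have fE: "finite E" by simp
  have eq: "(\<lambda>t. Lfun E (\<lambda>j. v j + (if j = i then t else 0))) =
    (\<lambda>t. - ((\<Sum>j\<in>UNIV. v j) + t) + (1 / real (card E)) *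
        (\<Sum>I\<in>E. ln ((\<Sum>j\<in>I. v j) + (if i \<in> I then t else 0))))"
    unfolding Lfun_def by (simp only: sum_shift) simp
  have dI: "((\<lambda>t. ln ((\<Sum>j\<in>I. v j) + (if i \<in> I then t else 0))) has_real_derivative
       (if i \<in> I then 1 / (\<Sum>j\<in>I. v j) else 0)) (at 0)" if "I \<in> E" for I
  proof (cases "i \<in> I")
    case True
    have "((\<lambda>t. ln ((\<Sum>j\<in>I. v j) + t)) has_real_derivative
       (1 / ((\<Sum>j\<in>I. v j) + 0)) * (0 + 1)) (at 0)"
      using pos that by (intro derivative_eq_intros) auto
    then show ?thesis using True by simp
  next
    case False
    then show ?thesis by simp
  qed
  have "((\<lambda>t. - ((\<Sum>j\<in>UNIV. v j) + t) + (1 / real (card E)) *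
        (\<Sum>I\<in>E. ln ((\<Sum>j\<in>I. v j) + (if i \<in> I then t else 0)))) has_real_derivative
        (- (0 + 1) + (1 / real (card E)) * gsum E v i)) (at 0)"
    unfolding gsum_def
    by (rule derivative_eq_intros DERIV_sum dI | assumption | simp)+
  then show ?thesis unfolding partialD_def eq by (simp add: DERIV_imp_deriv)
qed

lemma simplex_pos:
  assumes "x \<in> simplexDelta E c" "0 < c"
  shows "\<forall>I\<in>E. (\<Sum>j\<in>I. x j) > 0"
  using assms unfolding simplexDelta_def by force

lemma key:
  fixes E :: "'n::finite set set" and u v :: "'n \<Rightarrow> real"
  assumes pu: "\<forall>I\<in>E. (\<Sum>j\<in>I. u j) > 0" and pv: "\<forall>I\<in>E. (\<Sum>j\<in>I. v j) > 0"
    and z: "\<forall>i. (u i - v i) * (gsum E u i - gsum E v i) = 0"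
  shows "\<forall>I\<in>E. (\<Sum>j\<in>I. u j) = (\<Sum>j\<in>I. v j)"
proof -
  define a where "a I = 1 / (\<Sum>j\<in>I. u j) - 1 / (\<Sum>j\<in>I. v j)" for I
  have "0 = (\<Sum>i\<in>UNIV. (u i - v i) * (gsum E u i - gsum E v i))" using z by (metis (no_types, lifting) sum.neutral)
  also have "\<dots> = (\<Sum>i\<in>UNIV. \<Sum>I\<in>E. (u i - v i) * (if i \<in> I then a I else 0))"
  proof (intro sum.cong refl)
    fix i
    have "gsum E u i - gsum E v i = (\<Sum>I\<in>E. (if i \<in> I then a I else 0))"
      unfolding gsum_def sum_subtractf[symmetric] by (rule sum.cong) (simp_all add: a_def)
    then show "(u i - v i) * (gsum E u i - gsum E v i) = (\<Sum>I\<in>E. (u i - v i) * (if i \<in> I then a I else 0))"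
      by (simp only: sum_distrib_left)
  qed
  also have "\<dots> = (\<Sum>I\<in>E. \<Sum>i\<in>UNIV. (u i - v i) * (if i \<in> I then a I else 0))"
    by (rule sum.swap)
  also have "\<dots> = (\<Sum>I\<in>E. a I * ((\<Sum>j\<in>I. u j) - (\<Sum>j\<in>I. v j)))"
  proof (intro sum.cong refl)
    fix I assume "I \<in> E"
    have "(\<Sum>i\<in>UNIV. (u i - v i) * (if i \<in> I then a I else 0)) = (\<Sum>i\<in>I. a I * (u i - v i))"
      by (simp add: if_distrib[of "\<lambda>x. _ * x"] sum.If_cases mult.commute)
    also have "\<dots> = a I * ((\<Sum>j\<in>I. u j) - (\<Sum>j\<in>I. v j))"
      by (simp add: sum_distrib_left[symmetric] sum_subtractf)
    finally show "(\<Sum>i\<in>UNIV. (u i - v i) * (if i \<in> I then a I else 0)) = a I * ((\<Sum>j\<in>I. u j) - (\<Sum>j\<in>I. v j))" .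
  qed
  finally have S0: "(\<Sum>I\<in>E. - (a I * ((\<Sum>j\<in>I. u j) - (\<Sum>j\<in>I. v j)))) = 0"
    by (simp add: sum_negf)
  have nn: "\<forall>I\<in>E. 0 \<le> - (a I * ((\<Sum>j\<in>I. u j) - (\<Sum>j\<in>I. v j)))"
  proof
    fix I assume I: "I \<in> E"
    define p where "p = (\<Sum>j\<in>I. u j)"
    define q where "q = (\<Sum>j\<in>I. v j)"
    have p: "p > 0" and q: "q > 0" using I pu pv p_def q_def by auto
    have "- (a I * (p - q)) = (p - q)^2 / (p * q)"
      unfolding a_def p_def[symmetric] q_def[symmetric] using p q
      by (simp add: field_simps power2_eq_square)
    also have "\<dots> \<ge> 0" using p q by simp
    finally show "0 \<le> - (a I * ((\<Sum>j\<in>I. u j) - (\<Sum>j\<in>I. v j)))" by (simp add: p_def q_def)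
  qed
  have allz: "\<forall>J\<in>E. - (a J * ((\<Sum>j\<in>J. u j) - (\<Sum>j\<in>J. v j))) = 0"
    using sum_nonneg_eq_0_iff[of E "\<lambda>J. - (a J * ((\<Sum>j\<in>J. u j) - (\<Sum>j\<in>J. v j)))"] S0 nn
    by simp
  show ?thesis
  proof
    fix I assume I: "I \<in> E"
    define p where "p = (\<Sum>j\<in>I. u j)"
    define q where "q = (\<Sum>j\<in>I. v j)"
    have p: "p > 0" and q: "q > 0" using I pu pv p_def q_def by auto
    have "- (a I * (p - q)) = 0" using bspec[OF allz I] unfolding p_def q_def .
    moreover have "- (a I * (p - q)) = (p - q)^2 / (p * q)"
      unfolding a_def p_def[symmetric] q_def[symmetric] using p q
      by (simp add: field_simps power2_eq_square)
    ultimately have "(p - q)^2 = 0" using p q by simp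
    then show "(\<Sum>j\<in>I. u j) = (\<Sum>j\<in>I. v j)" unfolding p_def q_def by simp
  qed
qed

lemma part1:
  fixes E :: "'n::finite set set" and c :: real
  assumes c: "0 < c" and v: "v \<in> LambdaS E c S"
  shows "LambdaS E c S = face E c S \<inter> {v + w | w. w \<in> kerK E}"
proof
  have vf: "v \<in> face E c S" and vd: "\<forall>i\<in>S. partialD (Lfun E) v i = 0" using v unfolding LambdaS_def by auto
  have vs: "v \<in> simplexDelta E c" using vf unfolding face_def by auto
  have pv: "\<forall>I\<in>E. (\<Sum>j\<in>I. v j) > 0" using simplex_pos[OF vs c] .
  show "LambdaS E c S \<subseteq> face E c S \<inter> {v + w | w. w \<in> kerK E}"
  proof
    fix u assume u: "u \<in> LambdaS E c S"
    have uf: "u \<in> face E c S" and ud: "\<forall>i\<in>S. partialD (Lfun E) u i = 0" using u unfolding LambdaS_def by auto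
    have us: "u \<in> simplexDelta E c" using uf unfolding face_def by auto
    have pu: "\<forall>I\<in>E. (\<Sum>j\<in>I. u j) > 0" using simplex_pos[OF us c] .
    have z: "\<forall>i. (u i - v i) * (gsum E u i - gsum E v i) = 0"
    proof
      fix i show "(u i - v i) * (gsum E u i - gsum E v i) = 0"
      proof (cases "i \<in> S")
        case True
        then have "-1 + (1 / real (card E)) * gsum E u i = -1 + (1 / real (card E)) * gsum E v i"
          using ud vd partialD_eq[OF pu] partialD_eq[OF pv] by metis
        moreover have "card E > 0"
        proof -
          have "E \<noteq> {}"
          proof
            assume "E = {}"
            then have "gsum E u i = 0 \<and> gsum E v i = 0" unfolding gsum_def by simp
            then have "partialD (Lfun E) u i = -1" using partialD_eq[OF pu, of i] by simp
            then show False using True ud by simp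
          qed
          then show ?thesis by (simp add: card_gt_0_iff)
        qed
        ultimately show ?thesis by auto
      next
        case False
        then have "u i = 0" "v i = 0" using uf vf unfolding face_def by auto
        then show ?thesis by simp
      qed
    qed
    have eqI: "\<forall>I\<in>E. (\<Sum>j\<in>I. u j) = (\<Sum>j\<in>I. v j)" using key[OF pu pv z] .
    have "(\<Sum>j\<in>UNIV. u j) = 1" "(\<Sum>j\<in>UNIV. v j) = 1" using us vs unfolding simplexDelta_def by auto
    then have "u - v \<in> kerK E" using eqI unfolding kerK_def by (simp add: sum_subtractf)
    moreover have "u = v + (u - v)" by simp
    ultimately show "u \<in> face E c S \<inter> {v + w | w. w \<in> kerK E}" using uf by blast
  qed
  show "face E c S \<inter> {v + w | w. w \<in> kerK E} \<subseteq> LambdaS E c S"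
  proof
    fix u assume "u \<in> face E c S \<inter> {v + w | w. w \<in> kerK E}"
    then obtain w where uf: "u \<in> face E c S" and w: "w \<in> kerK E" and uw: "u = v + w" by blast
    have us: "u \<in> simplexDelta E c" using uf unfolding face_def by auto
    have pu: "\<forall>I\<in>E. (\<Sum>j\<in>I. u j) > 0" using simplex_pos[OF us c] .
    have eqI: "\<forall>I\<in>E. (\<Sum>j\<in>I. u j) = (\<Sum>j\<in>I. v j)"
      using w unfolding kerK_def uw by (simp add: sum.distrib)
    have "gsum E u i = gsum E v i" for i unfolding gsum_def using eqI
      by (intro sum.cong) auto
    then have "partialD (Lfun E) u i = partialD (Lfun E) v i" for i
      using partialD_eq[OF pu] partialD_eq[OF pv] by simp
    then show "u \<in> LambdaS E c S" using uf vd unfolding LambdaS_def by auto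
  qed
qed

theorem lemma3p1:
  fixes E :: "'n::finite set set" and c :: real
  assumes "hypergraph E"
    and "0 < c" and "c < 1 / real (card E)"
  shows "(\<forall>S. LambdaS E c S \<noteq> {} \<longrightarrow>
            (\<forall>v\<in>LambdaS E c S.
               LambdaS E c S = face E c S \<inter> {v + w | w. w \<in> kerK E} \<and>
               face E c S \<inter> {v + w | w. w \<in> kerK E} = {v + w | w. w \<in> kerK E \<and> v + w \<in> face E c S}))
       \<and> (\<exists>T. finite T \<and> LambdaSet E c \<subseteq> (\<Union>t\<in>T. {t + w | w. w \<in> kerK E}))"
proof (intro conjI allI impI ballI)
  fix S v assume "v \<in> LambdaS E c S"
  then show "LambdaS E c S = face E c S \<inter> {v + w | w. w \<in> kerK E}" using part1 assms(2) by blast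
next
  fix S v
  show "face E c S \<inter> {v + w | w. w \<in> kerK E} = {v + w | w. w \<in> kerK E \<and> v + w \<in> face E c S}"
    by blast
next
  define T where "T = (\<lambda>S. SOME v. v \<in> LambdaS E c S) ` (UNIV :: 'n set set)"
  have "finite T" unfolding T_def by simp
  moreover have "LambdaSet E c \<subseteq> (\<Union>t\<in>T. {t + w | w. w \<in> kerK E})"
  proof
    fix u assume u: "u \<in> LambdaSet E c"
    define S where "S = {i. u i \<noteq> 0}"
    have us: "u \<in> simplexDelta E c" and F: "\<forall>i. Ffield E u i = 0" using u unfolding LambdaSet_def by auto
    have uL: "u \<in> LambdaS E c S"
      using us F unfolding LambdaS_def face_def S_def Ffield_def by auto
    define t where "t = (SOME v. v \<in> LambdaS E c S)"
    have t: "t \<in> LambdaS E c S" unfolding t_def using uL by (metis someI)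
    have "u \<in> {t + w | w. w \<in> kerK E}" using part1[OF assms(2) t] uL by blast
    moreover have "t \<in> T" unfolding T_def t_def by blast
    ultimately show "u \<in> (\<Union>t\<in>T. {t + w | w. w \<in> kerK E})" by blast
  qed
  ultimately show "\<exists>T. finite T \<and> LambdaSet E c \<subseteq> (\<Union>t\<in>T. {t + w | w. w \<in> kerK E})" by blast
qed

end
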